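(* Let $\rho$ be a 2-qubit pure state whose Bloch representation has the form $\boldsymbol{\alpha}=O_1(\mu,0,0)^T$, $\boldsymbol{\beta}=O_2(\mu,0,0)^T$, $C=O_1\,\mathrm{diag}(1,\sin\theta,-\sin\theta)\,O_2^T$, with $\theta\in[0,\pi/2]$, $\mu=\cos\theta$, $O_1,O_2\in SO(3)$, and suppose $|\mu|=1$. Then $I_{\chi^2,post}(\rho)=2$.
   Context: Let $\sigma_1,\sigma_2,\sigma_3$ be the Pauli matrices. For a 2-qubit density matrix $\rho$ its Bloch vector is $(b_1,\dots,b_{16})$, where $b_1=1$; $(b_2,b_3,b_4)=\boldsymbol{\alpha}$ with $\alpha_j=\operatorname{tr}((\sigma_j\otimes I)\rho)$; $(b_5,b_6,b_7)=\boldsymbol{\beta}$ with $\beta_j=\operatorname{tr}((I\otimes\sigma_j)\rho)$; and $(b_8,\dots,b_{16})$ are the entries $C_{jk}=\operatorname{tr}((\sigma_j\otimes\sigma_k)\rho)$ of the $3\times3$ matrix $C$ in row-major order. Every 2-qubit pure state has a Bloch representation of the displayed form. For $b\in[-1,1]$ and $h\in(-1,1)$, $D_{\chi^2}(b,h)=\frac{((b+1)/2)^2}{(h+1)/2}+\frac{((1-b)/2)^2}{(1-h)/2}-1$; if $h=\pm1$ and $b=h$, set $D_{\chi^2}(b,h)=0$. The posterior information content of a pure state with Bloch vector $(b_1,\dots,b_{16})$ is defined as follows. For $i=2,\dots,16$, let $b_i^{max}$ and $b_i^{min}$ be the maximum and the minimum of the $i$-th Bloch component over all 2-qubit pure states whose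 components $1,\dots,i-1$ equal $b_1,\dots,b_{i-1}$, and let $h_i=(b_i^{max}+b_i^{min})/2$. Then $I_{\chi^2,post}=\sum_{i=2}^{16}D_{\chi^2}(b_i,h_i)$. *)

theory Defs
  imports "HOL-Analysis.Analysis"
begin

text \<open>Complex matrices are represented as functions nat => nat => complex;
  only the entries with indices below the dimension matter.
  One-qubit matrices have indices 0,1; two-qubit matrices have indices 0..3,
  the computational basis vector |a b> having index 2*a+b.\<close>

type_synonym cmat = "nat \<Rightarrow> nat \<Rightarrow> complex"

definition pauli :: "nat \<Rightarrow> cmat" where
  "pauli k = (\<lambda>a c.
     if k = 0 then (if a = c then 1 else 0)
     else if k = 1 then (if a = c then 0 else 1)
     else if k = 2 then (if a = 0 \<and> c = 1 then - \<i> else if a = 1 \<and> c = 0 then \<i> else 0)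
     else (if a = c then (if a = 0 then 1 else -1) else 0))"

definition tensor2 :: "cmat \<Rightarrow> cmat \<Rightarrow> cmat" where
  "tensor2 A B = (\<lambda>i j. A (i div 2) (j div 2) * B (i mod 2) (j mod 2))"

definition tr_prod4 :: "cmat \<Rightarrow> cmat \<Rightarrow> complex" where
  "tr_prod4 M rho = (\<Sum>i<4. \<Sum>j<4. M i j * rho j i)"

definition pure_2qubit :: "cmat \<Rightarrow> bool" where
  "pure_2qubit rho \<longleftrightarrow> (\<exists>psi :: nat \<Rightarrow> complex.
      (\<Sum>i<4. (cmod (psi i))\<^sup>2) = 1 \<and>
      (\<forall>i<4. \<forall>j<4. rho i j = psi i * cnj (psi j)))"

text \<open>Which Pauli pair (sigma_j, sigma_k) (0 = identity) corresponds to Bloch index i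
  (1..16): 1 -> (I,I); 2..4 -> alpha; 5..7 -> beta; 8..16 -> C row-major.\<close>
definition bloch_idx :: "nat \<Rightarrow> nat \<times> nat" where
  "bloch_idx i =
     (if i = 1 then (0, 0)
      else if i \<le> 4 then (i - 1, 0)
      else if i \<le> 7 then (0, i - 4)
      else ((i - 8) div 3 + 1, (i - 8) mod 3 + 1))"

definition bloch :: "cmat \<Rightarrow> nat \<Rightarrow> real" where
  "bloch rho i = Re (tr_prod4 (tensor2 (pauli (fst (bloch_idx i))) (pauli (snd (bloch_idx i)))) rho)"

definition bloch_alpha :: "cmat \<Rightarrow> real^3" where
  "bloch_alpha rho = vector [bloch rho 2, bloch rho 3, bloch rho 4]"

definition bloch_beta :: "cmat \<Rightarrow> real^3" where
  "bloch_beta rho = vector [bloch rho 5, bloch rho 6, bloch rho 7]"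

definition bloch_C :: "cmat \<Rightarrow> real^3^3" where
  "bloch_C rho = vector [vector [bloch rho 8, bloch rho 9, bloch rho 10],
                         vector [bloch rho 11, bloch rho 12, bloch rho 13],
                         vector [bloch rho 14, bloch rho 15, bloch rho 16]]"

definition cond_range :: "cmat \<Rightarrow> nat \<Rightarrow> real set" where
  "cond_range rho i = {bloch rho' i | rho'. pure_2qubit rho' \<and>
                          (\<forall>l\<in>{1..<i}. bloch rho' l = bloch rho l)}"

definition b_max :: "cmat \<Rightarrow> nat \<Rightarrow> real" where
  "b_max rho i = Sup (cond_range rho i)"

definition b_min :: "cmat \<Rightarrow> nat \<Rightarrow> real" where
  "b_min rho i = Inf (cond_range rho i)"

definition h_mid :: "cmat \<Rightarrow> nat \<Rightarrow> real" where
  "h_mid rho i = (b_max rho i + b_min rho i) / 2"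

definition D_chi2 :: "real \<Rightarrow> real \<Rightarrow> real" where
  "D_chi2 b h =
     (if -1 < h \<and> h < 1
      then ((b + 1) / 2)\<^sup>2 / ((h + 1) / 2) + ((1 - b) / 2)\<^sup>2 / ((1 - h) / 2) - 1
      else if b = h then 0 else undefined)"

definition I_chi2_post :: "cmat \<Rightarrow> real" where
  "I_chi2_post rho = (\<Sum>i=2..16. D_chi2 (bloch rho i) (h_mid rho i))"

definition SO3 :: "(real^3^3) set" where
  "SO3 = {Q. orthogonal_matrix Q \<and> det Q = 1}"

end

theory Submission imports Defs begin

lemma s4: "(\<Sum>i<4::nat. f i) = f 0 + f 1 + f 2 + (f 3::'a::comm_monoid_add)"
  by (simp add: numeral_eq_Suc lessThan_Suc add_ac)

lemma bloch_psi_gen: assumes "\<forall>i<4. \<forall>j<4. rho i j = psi i * cnj (psi j)"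
  shows "bloch rho k = Re (\<Sum>i<4. \<Sum>j<4. tensor2 (pauli (fst (bloch_idx k))) (pauli (snd (bloch_idx k))) i j * (psi j * cnj (psi i)))"
  unfolding bloch_def tr_prod4_def using assms by simp

lemma bloch_psi_1: assumes "\<forall>i<4. \<forall>j<4. rho i j = psi i * cnj (psi j)" shows "bloch rho 1 = Re (psi 0)*Re (psi 0) + Re (psi 1)*Re (psi 1) + Re (psi 2)*Re (psi 2) + Re (psi 3)*Re (psi 3) + Im (psi 0)*Im (psi 0) + Im (psi 1)*Im (psi 1) + Im (psi 2)*Im (psi 2) + Im (psi 3)*Im (psi 3)"
  apply (subst bloch_psi_gen[OF assms])
  apply (simp add: s4 tensor2_def pauli_def bloch_idx_def algebra_simps)
  done

lemma bloch_psi_2: assumes "\<forall>i<4. \<forall>j<4. rho i j = psi i * cnj (psi j)" shows "bloch rho 2 = 2*Re (psi 0)*Re (psi 2) + 2*Re (psi 1)*Re (psi 3) + 2*Im (psi 0)*Im (psi 2) + 2*Im (psi 1)*Im (psi 3)"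
  apply (subst bloch_psi_gen[OF assms])
  apply (simp add: s4 tensor2_def pauli_def bloch_idx_def algebra_simps)
  done

lemma bloch_psi_3: assumes "\<forall>i<4. \<forall>j<4. rho i j = psi i * cnj (psi j)" shows "bloch rho 3 = 2*Re (psi 0)*Im (psi 2) + 2*Re (psi 1)*Im (psi 3) - 2*Re (psi 2)*Im (psi 0) - 2*Re (psi 3)*Im (psi 1)"
  apply (subst bloch_psi_gen[OF assms])
  apply (simp add: s4 tensor2_def pauli_def bloch_idx_def algebra_simps)
  done

lemma bloch_psi_4: assumes "\<forall>i<4. \<forall>j<4. rho i j = psi i * cnj (psi j)" shows "bloch rho 4 = Re (psi 0)*Re (psi 0) + Re (psi 1)*Re (psi 1) - Re (psi 2)*Re (psi 2) - Re (psi 3)*Re (psi 3) + Im (psi 0)*Im (psi 0) + Im (psi 1)*Im (psi 1) - Im (psi 2)*Im (psi 2) - Im (psi 3)*Im (psi 3)"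
  apply (subst bloch_psi_gen[OF assms])
  apply (simp add: s4 tensor2_def pauli_def bloch_idx_def algebra_simps)
  done

lemma bloch_psi_5: assumes "\<forall>i<4. \<forall>j<4. rho i j = psi i * cnj (psi j)" shows "bloch rho 5 = 2*Re (psi 0)*Re (psi 1) + 2*Re (psi 2)*Re (psi 3) + 2*Im (psi 0)*Im (psi 1) + 2*Im (psi 2)*Im (psi 3)"
  apply (subst bloch_psi_gen[OF assms])
  apply (simp add: s4 tensor2_def pauli_def bloch_idx_def algebra_simps)
  done

lemma bloch_psi_6: assumes "\<forall>i<4. \<forall>j<4. rho i j = psi i * cnj (psi j)" shows "bloch rho 6 = 2*Re (psi 0)*Im (psi 1) - 2*Re (psi 1)*Im (psi 0) + 2*Re (psi 2)*Im (psi 3) - 2*Re (psi 3)*Im (psi 2)"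
  apply (subst bloch_psi_gen[OF assms])
  apply (simp add: s4 tensor2_def pauli_def bloch_idx_def algebra_simps)
  done

lemma bloch_psi_7: assumes "\<forall>i<4. \<forall>j<4. rho i j = psi i * cnj (psi j)" shows "bloch rho 7 = Re (psi 0)*Re (psi 0) - Re (psi 1)*Re (psi 1) + Re (psi 2)*Re (psi 2) - Re (psi 3)*Re (psi 3) + Im (psi 0)*Im (psi 0) - Im (psi 1)*Im (psi 1) + Im (psi 2)*Im (psi 2) - Im (psi 3)*Im (psi 3)"
  apply (subst bloch_psi_gen[OF assms])
  apply (simp add: s4 tensor2_def pauli_def bloch_idx_def algebra_simps)
  done

lemma bloch_psi_8: assumes "\<forall>i<4. \<forall>j<4. rho i j = psi i * cnj (psi j)" shows "bloch rho 8 = 2*Re (psi 0)*Re (psi 3) + 2*Re (psi 1)*Re (psi 2) + 2*Im (psi 0)*Im (psi 3) + 2*Im (psi 1)*Im (psi 2)"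
  apply (subst bloch_psi_gen[OF assms])
  apply (simp add: s4 tensor2_def pauli_def bloch_idx_def algebra_simps)
  done

lemma bloch_psi_9: assumes "\<forall>i<4. \<forall>j<4. rho i j = psi i * cnj (psi j)" shows "bloch rho 9 = 2*Re (psi 0)*Im (psi 3) - 2*Re (psi 1)*Im (psi 2) + 2*Re (psi 2)*Im (psi 1) - 2*Re (psi 3)*Im (psi 0)"
  apply (subst bloch_psi_gen[OF assms])
  apply (simp add: s4 tensor2_def pauli_def bloch_idx_def algebra_simps)
  done

lemma bloch_psi_10: assumes "\<forall>i<4. \<forall>j<4. rho i j = psi i * cnj (psi j)" shows "bloch rho 10 = 2*Re (psi 0)*Re (psi 2) - 2*Re (psi 1)*Re (psi 3) + 2*Im (psi 0)*Im (psi 2) - 2*Im (psi 1)*Im (psi 3)"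
  apply (subst bloch_psi_gen[OF assms])
  apply (simp add: s4 tensor2_def pauli_def bloch_idx_def algebra_simps)
  done

lemma bloch_psi_11: assumes "\<forall>i<4. \<forall>j<4. rho i j = psi i * cnj (psi j)" shows "bloch rho 11 = 2*Re (psi 0)*Im (psi 3) + 2*Re (psi 1)*Im (psi 2) - 2*Re (psi 2)*Im (psi 1) - 2*Re (psi 3)*Im (psi 0)"
  apply (subst bloch_psi_gen[OF assms])
  apply (simp add: s4 tensor2_def pauli_def bloch_idx_def algebra_simps)
  done

lemma bloch_psi_12: assumes "\<forall>i<4. \<forall>j<4. rho i j = psi i * cnj (psi j)" shows "bloch rho 12 = - 2*Re (psi 0)*Re (psi 3) + 2*Re (psi 1)*Re (psi 2) - 2*Im (psi 0)*Im (psi 3) + 2*Im (psi 1)*Im (psi 2)"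
  apply (subst bloch_psi_gen[OF assms])
  apply (simp add: s4 tensor2_def pauli_def bloch_idx_def algebra_simps)
  done

lemma bloch_psi_13: assumes "\<forall>i<4. \<forall>j<4. rho i j = psi i * cnj (psi j)" shows "bloch rho 13 = 2*Re (psi 0)*Im (psi 2) - 2*Re (psi 1)*Im (psi 3) - 2*Re (psi 2)*Im (psi 0) + 2*Re (psi 3)*Im (psi 1)"
  apply (subst bloch_psi_gen[OF assms])
  apply (simp add: s4 tensor2_def pauli_def bloch_idx_def algebra_simps)
  done

lemma bloch_psi_14: assumes "\<forall>i<4. \<forall>j<4. rho i j = psi i * cnj (psi j)" shows "bloch rho 14 = 2*Re (psi 0)*Re (psi 1) - 2*Re (psi 2)*Re (psi 3) + 2*Im (psi 0)*Im (psi 1) - 2*Im (psi 2)*Im (psi 3)"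
  apply (subst bloch_psi_gen[OF assms])
  apply (simp add: s4 tensor2_def pauli_def bloch_idx_def algebra_simps)
  done

lemma bloch_psi_15: assumes "\<forall>i<4. \<forall>j<4. rho i j = psi i * cnj (psi j)" shows "bloch rho 15 = 2*Re (psi 0)*Im (psi 1) - 2*Re (psi 1)*Im (psi 0) - 2*Re (psi 2)*Im (psi 3) + 2*Re (psi 3)*Im (psi 2)"
  apply (subst bloch_psi_gen[OF assms])
  apply (simp add: s4 tensor2_def pauli_def bloch_idx_def algebra_simps)
  done

lemma bloch_psi_16: assumes "\<forall>i<4. \<forall>j<4. rho i j = psi i * cnj (psi j)" shows "bloch rho 16 = Re (psi 0)*Re (psi 0) - Re (psi 1)*Re (psi 1) - Re (psi 2)*Re (psi 2) + Re (psi 3)*Re (psi 3) + Im (psi 0)*Im (psi 0) - Im (psi 1)*Im (psi 1) - Im (psi 2)*Im (psi 2) + Im (psi 3)*Im (psi 3)"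
  apply (subst bloch_psi_gen[OF assms])
  apply (simp add: s4 tensor2_def pauli_def bloch_idx_def algebra_simps)
  done
lemmas bloch_psi = bloch_psi_1 bloch_psi_2 bloch_psi_3 bloch_psi_4 bloch_psi_5 bloch_psi_6
  bloch_psi_7 bloch_psi_8 bloch_psi_9 bloch_psi_10 bloch_psi_11 bloch_psi_12 bloch_psi_13
  bloch_psi_14 bloch_psi_15 bloch_psi_16

lemma pure_psi:
  assumes "pure_2qubit r"
  obtains psi where "\<forall>i<4. \<forall>j<4. r i j = psi i * cnj (psi j)" and "bloch r 1 = 1"
proof -
  obtain psi where n: "(\<Sum>i<4. (cmod (psi i))\<^sup>2) = 1" and h: "\<forall>i<4. \<forall>j<4. r i j = psi i * cnj (psi j)"
    using assms unfolding pure_2qubit_def by blast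
  have "bloch r 1 = 1" using n unfolding bloch_psi_1[OF h] s4 cmod_power2 by (simp add: power2_eq_square add_ac)
  then show ?thesis using that h by blast
qed

lemma pure_bloch1: "pure_2qubit r \<Longrightarrow> bloch r 1 = 1"
  by (erule pure_psi) auto

lemma pure_alpha_bound:
  assumes "pure_2qubit r"
  shows "(bloch r 2)\<^sup>2 + (bloch r 3)\<^sup>2 + (bloch r 4)\<^sup>2 \<le> 1"
    and "(bloch r 5)\<^sup>2 + (bloch r 6)\<^sup>2 + (bloch r 7)\<^sup>2 \<le> 1"
proof -
  obtain psi where h: "\<forall>i<4. \<forall>j<4. r i j = psi i * cnj (psi j)" and n: "bloch r 1 = 1"
    using assms by (rule pure_psi)
  define D1 where "D1 = Re (psi 0)*Re (psi 3) - Re (psi 1)*Re (psi 2) - Im (psi 0)*Im (psi 3) + Im (psi 1)*Im (psi 2)"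
  define D2 where "D2 = Re (psi 0)*Im (psi 3) - Re (psi 1)*Im (psi 2) - Re (psi 2)*Im (psi 1) + Re (psi 3)*Im (psi 0)"
  have e1: "(bloch r 1)\<^sup>2 - ((bloch r 2)\<^sup>2 + (bloch r 3)\<^sup>2 + (bloch r 4)\<^sup>2) = 4 * (D1\<^sup>2 + D2\<^sup>2)"
    unfolding bloch_psi[OF h] D1_def D2_def by algebra
  have e2: "(bloch r 1)\<^sup>2 - ((bloch r 5)\<^sup>2 + (bloch r 6)\<^sup>2 + (bloch r 7)\<^sup>2) = 4 * (D1\<^sup>2 + D2\<^sup>2)"
    unfolding bloch_psi[OF h] D1_def D2_def by algebra
  have "D1\<^sup>2 + D2\<^sup>2 \<ge> 0" by simp
  moreover have "(bloch r 1)\<^sup>2 = 1" using n by simp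
  ultimately show "(bloch r 2)\<^sup>2 + (bloch r 3)\<^sup>2 + (bloch r 4)\<^sup>2 \<le> 1" using e1 n by simp (smt (verit) zero_le_power2)
  have "D1\<^sup>2 + D2\<^sup>2 \<ge> 0" by simp
  moreover have "(bloch r 1)\<^sup>2 = 1" using n by simp
  ultimately show "(bloch r 5)\<^sup>2 + (bloch r 6)\<^sup>2 + (bloch r 7)\<^sup>2 \<le> 1" using e2 n by simp (smt (verit) zero_le_power2)
qed

lemma pure_prod:
  assumes "pure_2qubit r" and "(bloch r 2)\<^sup>2 + (bloch r 3)\<^sup>2 + (bloch r 4)\<^sup>2 = 1"
    and "8 \<le> i" and "i \<le> 16"
  shows "bloch r i = bloch r (2 + (i - 8) div 3) * bloch r (5 + (i - 8) mod 3)"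
proof -
  obtain psi where h: "\<forall>i<4. \<forall>j<4. r i j = psi i * cnj (psi j)" and n: "bloch r 1 = 1"
    using assms(1) by (rule pure_psi)
  define D1 where "D1 = Re (psi 0)*Re (psi 3) - Re (psi 1)*Re (psi 2) - Im (psi 0)*Im (psi 3) + Im (psi 1)*Im (psi 2)"
  define D2 where "D2 = Re (psi 0)*Im (psi 3) - Re (psi 1)*Im (psi 2) - Re (psi 2)*Im (psi 1) + Re (psi 3)*Im (psi 0)"
  have e1: "(bloch r 1)\<^sup>2 - ((bloch r 2)\<^sup>2 + (bloch r 3)\<^sup>2 + (bloch r 4)\<^sup>2) = 4 * (D1\<^sup>2 + D2\<^sup>2)"
    unfolding bloch_psi[OF h] D1_def D2_def by algebra
  moreover have "(bloch r 1)\<^sup>2 = 1" using n by simp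
  ultimately have "D1\<^sup>2 + D2\<^sup>2 = 0" using assms(2) by algebra
  then have d1: "D1 = 0" and d2: "D2 = 0" by (simp_all add: sum_power2_eq_zero_iff)
  have n': "Re (psi 0)*Re (psi 0) + Re (psi 1)*Re (psi 1) + Re (psi 2)*Re (psi 2) + Re (psi 3)*Re (psi 3) + Im (psi 0)*Im (psi 0) + Im (psi 1)*Im (psi 1) + Im (psi 2)*Im (psi 2) + Im (psi 3)*Im (psi 3) = 1"
    using n unfolding bloch_psi[OF h] .
  have ii: "i = 8 \<or> i = 9 \<or> i = 10 \<or> i = 11 \<or> i = 12 \<or> i = 13 \<or> i = 14 \<or> i = 15 \<or> i = 16"
    using assms(3,4) by presburger
  have c8: "bloch r 8 = bloch r 2 * bloch r 5"
    using d1 d2 n' unfolding D1_def D2_def bloch_psi[OF h] by algebra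
  have c9: "bloch r 9 = bloch r 2 * bloch r 6"
    using d1 d2 n' unfolding D1_def D2_def bloch_psi[OF h] by algebra
  have c10: "bloch r 10 = bloch r 2 * bloch r 7"
    using d1 d2 n' unfolding D1_def D2_def bloch_psi[OF h] by algebra
  have c11: "bloch r 11 = bloch r 3 * bloch r 5"
    using d1 d2 n' unfolding D1_def D2_def bloch_psi[OF h] by algebra
  have c12: "bloch r 12 = bloch r 3 * bloch r 6"
    using d1 d2 n' unfolding D1_def D2_def bloch_psi[OF h] by algebra
  have c13: "bloch r 13 = bloch r 3 * bloch r 7"
    using d1 d2 n' unfolding D1_def D2_def bloch_psi[OF h] by algebra
  have c14: "bloch r 14 = bloch r 4 * bloch r 5"
    using d1 d2 n' unfolding D1_def D2_def bloch_psi[OF h] by algebra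
  have c15: "bloch r 15 = bloch r 4 * bloch r 6"
    using d1 d2 n' unfolding D1_def D2_def bloch_psi[OF h] by algebra
  have c16: "bloch r 16 = bloch r 4 * bloch r 7"
    using d1 d2 n' unfolding D1_def D2_def bloch_psi[OF h] by algebra
  from ii show ?thesis
    using c8 c9 c10 c11 c12 c13 c14 c15 c16 by (elim disjE; simp)
qed

lemma spinor:
  fixes n1 n2 n3 :: real
  assumes "n1\<^sup>2 + n2\<^sup>2 + n3\<^sup>2 = 1"
  shows "\<exists>a c d. a\<^sup>2 + c\<^sup>2 + d\<^sup>2 = 1 \<and> 2*a*c = n1 \<and> 2*a*d = n2 \<and> a\<^sup>2 - c\<^sup>2 - d\<^sup>2 = n3"
proof (cases "n3 = -1")
  case True
  then have "n1\<^sup>2 + n2\<^sup>2 = 0" using assms by simp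
  then have "n1 = 0" "n2 = 0" by (simp_all add: sum_power2_eq_zero_iff)
  then show ?thesis using True by (intro exI[of _ 0] exI[of _ 1]) simp
next
  case False
  have n3: "n3 \<ge> -1"
  proof -
    have "n3\<^sup>2 \<le> 1" using assms by (smt (verit) zero_le_power2)
    then have "\<bar>n3\<bar> \<le> 1" using abs_le_square_iff[of n3 1] by simp
    then show ?thesis by (simp add: abs_le_iff)
  qed
  then have pos: "1 + n3 > 0" using False by simp
  define s where "s = sqrt (2 * (1 + n3))"
  have s0: "s > 0" using pos by (simp add: s_def)
  have ss: "s\<^sup>2 = 2 * (1 + n3)" using pos by (simp add: s_def)
  have e1: "((1 + n3)/s)\<^sup>2 + (n1/s)\<^sup>2 + (n2/s)\<^sup>2 = 1"
  proof -
    have "((1 + n3)/s)\<^sup>2 + (n1/s)\<^sup>2 + (n2/s)\<^sup>2 = ((1+n3)\<^sup>2 + n1\<^sup>2 + n2\<^sup>2) / s\<^sup>2"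
      using s0 by (simp add: power_divide field_simps)
    also have "(1+n3)\<^sup>2 + n1\<^sup>2 + n2\<^sup>2 = 2 * (1 + n3)" using assms by algebra
    also have "2 * (1 + n3) / s\<^sup>2 = 1" unfolding ss using pos by simp
    finally show ?thesis .
  qed
  have e2: "2 * ((1 + n3)/s) * (n1/s) = n1"
  proof -
    have "2 * ((1 + n3)/s) * (n1/s) = 2 * (1+n3) * n1 / s\<^sup>2" by (simp add: power2_eq_square)
    then show ?thesis unfolding ss using pos by simp
  qed
  have e3: "2 * ((1 + n3)/s) * (n2/s) = n2"
  proof -
    have "2 * ((1 + n3)/s) * (n2/s) = 2 * (1+n3) * n2 / s\<^sup>2" by (simp add: power2_eq_square)
    then show ?thesis unfolding ss using pos by simp
  qed
  have e4: "((1 + n3)/s)\<^sup>2 - (n1/s)\<^sup>2 - (n2/s)\<^sup>2 = n3"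
  proof -
    have "((1 + n3)/s)\<^sup>2 - (n1/s)\<^sup>2 - (n2/s)\<^sup>2 = ((1+n3)\<^sup>2 - n1\<^sup>2 - n2\<^sup>2) / s\<^sup>2"
      using s0 by (simp add: power_divide field_simps)
    also have "(1+n3)\<^sup>2 - n1\<^sup>2 - n2\<^sup>2 = n3 * (2 * (1 + n3))" using assms by algebra
    finally show ?thesis unfolding ss using pos by simp
  qed
  show ?thesis using e1 e2 e3 e4 by blast
qed

lemma product_exists:
  fixes n1 n2 n3 m1 m2 m3 :: real
  assumes "n1\<^sup>2 + n2\<^sup>2 + n3\<^sup>2 = 1" and "m1\<^sup>2 + m2\<^sup>2 + m3\<^sup>2 = 1"
  shows "\<exists>r. pure_2qubit r \<and> bloch r 1 = 1 \<and> bloch r 2 = n1 \<and> bloch r 3 = n2 \<and> bloch r 4 = n3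
            \<and> bloch r 5 = m1 \<and> bloch r 6 = m2 \<and> bloch r 7 = m3"
proof -
  obtain a c d where u: "a\<^sup>2 + c\<^sup>2 + d\<^sup>2 = 1" "2*a*c = n1" "2*a*d = n2" "a\<^sup>2 - c\<^sup>2 - d\<^sup>2 = n3"
    using spinor[OF assms(1)] by blast
  obtain a' c' d' where v: "a'\<^sup>2 + c'\<^sup>2 + d'\<^sup>2 = 1" "2*a'*c' = m1" "2*a'*d' = m2" "a'\<^sup>2 - c'\<^sup>2 - d'\<^sup>2 = m3"
    using spinor[OF assms(2)] by blast
  define psi :: "nat \<Rightarrow> complex" where "psi = (\<lambda>k. if k = 0 then Complex (a*a') 0
     else if k = 1 then Complex (a*c') (a*d') else if k = 2 then Complex (c*a') (d*a')
     else Complex (c*c' - d*d') (c*d' + d*c'))"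
  define r where "r = (\<lambda>i j. psi i * cnj (psi j))"
  have h: "\<forall>i<4. \<forall>j<4. r i j = psi i * cnj (psi j)" by (simp add: r_def)
  have p: "Re (psi 0) = a*a'" "Im (psi 0) = 0" "Re (psi 1) = a*c'" "Im (psi 1) = a*d'"
     "Re (psi 2) = c*a'" "Im (psi 2) = d*a'" "Re (psi 3) = c*c' - d*d'" "Im (psi 3) = c*d' + d*c'"
    by (simp_all add: psi_def)
  define U where "U = a\<^sup>2 + c\<^sup>2 + d\<^sup>2"
  define V where "V = a'\<^sup>2 + c'\<^sup>2 + d'\<^sup>2"
  have "(\<Sum>i<4. (cmod (psi i))\<^sup>2) = U * V"
    unfolding s4 cmod_power2 p U_def V_def by (simp add: algebra_simps power2_eq_square)
  then have "(\<Sum>i<4. (cmod (psi i))\<^sup>2) = 1" using u v unfolding U_def V_def by simp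
  then have "pure_2qubit r" unfolding pure_2qubit_def using h by blast
  moreover have "bloch r 1 = U * V" "bloch r 2 = (2*a*c) * V" "bloch r 3 = (2*a*d) * V"
     "bloch r 4 = (a\<^sup>2 - c\<^sup>2 - d\<^sup>2) * V"
     "bloch r 5 = U * (2*a'*c')" "bloch r 6 = U * (2*a'*d')" "bloch r 7 = U * (a'\<^sup>2 - c'\<^sup>2 - d'\<^sup>2)"
    unfolding bloch_psi[OF h] p U_def V_def by (simp_all add: algebra_simps power2_eq_square)
  moreover have "U = 1" "V = 1" using u v unfolding U_def V_def by simp_all
  ultimately have "pure_2qubit r \<and> bloch r 1 = 1 \<and> bloch r 2 = n1 \<and> bloch r 3 = n2 \<and> bloch r 4 = n3
            \<and> bloch r 5 = m1 \<and> bloch r 6 = m2 \<and> bloch r 7 = m3" using u v by simp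
  then show ?thesis by (rule exI[of _ r])
qed

lemma sym_sup_inf:
  fixes S :: "real set"
  assumes "S \<subseteq> {x. \<bar>x\<bar> \<le> r}" "r \<in> S" "-r \<in> S"
  shows "Sup S = r" "Inf S = -r"
proof -
  show "Sup S = r" by (rule cSup_eq_maximum) (use assms in auto)
  show "Inf S = -r" by (rule cInf_eq_minimum) (use assms in force)+
qed

lemma D0: "D_chi2 b 0 = b\<^sup>2"
  unfolding D_chi2_def by (simp add: field_simps power2_eq_square)

lemma Dsame: "\<bar>b\<bar> \<le> 1 \<Longrightarrow> D_chi2 b b = 0"
proof -
  assume a: "\<bar>b\<bar> \<le> 1"
  show ?thesis
  proof (cases "-1 < b \<and> b < 1")
    case True
    then have "(b + 1)/2 \<noteq> 0" "(1 - b)/2 \<noteq> 0" by auto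
    moreover have sq: "x \<noteq> 0 \<Longrightarrow> x\<^sup>2 / x = x" for x :: real by (simp add: power2_eq_square)
    ultimately have "((b + 1)/2)\<^sup>2 / ((b + 1)/2) = (b + 1)/2" "((1 - b)/2)\<^sup>2 / ((1 - b)/2) = (1 - b)/2"
      by blast+
    have "D_chi2 b b = ((b + 1)/2)\<^sup>2 / ((b + 1)/2) + ((1 - b)/2)\<^sup>2 / ((1 - b)/2) - 1"
      unfolding D_chi2_def using True by (rule if_P)
    also have "\<dots> = 0" unfolding \<open>((b + 1)/2)\<^sup>2 / ((b + 1)/2) = (b + 1)/2\<close> \<open>((1 - b)/2)\<^sup>2 / ((1 - b)/2) = (1 - b)/2\<close>
      by (simp add: field_simps)
    finally show ?thesis .
  next
    case False
    show ?thesis unfolding D_chi2_def by (simp only: if_not_P[OF False] if_P[OF refl])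
  qed
qed

lemma ball2: "(\<forall>l\<in>{1..<2::nat}. P l) \<longleftrightarrow> P 1"
  by (auto simp: numeral_eq_Suc less_Suc_eq)
lemma ball3: "(\<forall>l\<in>{1..<3::nat}. P l) \<longleftrightarrow> P 1 \<and> P 2"
  by (auto simp: numeral_eq_Suc less_Suc_eq)
lemma ball4: "(\<forall>l\<in>{1..<4::nat}. P l) \<longleftrightarrow> P 1 \<and> P 2 \<and> P 3"
  by (auto simp: numeral_eq_Suc less_Suc_eq)
lemma ball5: "(\<forall>l\<in>{1..<5::nat}. P l) \<longleftrightarrow> P 1 \<and> P 2 \<and> P 3 \<and> P 4"
  by (auto simp: numeral_eq_Suc less_Suc_eq)
lemma ball6: "(\<forall>l\<in>{1..<6::nat}. P l) \<longleftrightarrow> P 1 \<and> P 2 \<and> P 3 \<and> P 4 \<and> P 5"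
  by (auto simp: numeral_eq_Suc less_Suc_eq)
lemma ball7: "(\<forall>l\<in>{1..<7::nat}. P l) \<longleftrightarrow> P 1 \<and> P 2 \<and> P 3 \<and> P 4 \<and> P 5 \<and> P 6"
  by (auto simp: numeral_eq_Suc less_Suc_eq)
lemma ball_ge8: "8 \<le> i \<Longrightarrow> (\<forall>l\<in>{1..<i::nat}. P l) \<Longrightarrow> P 1 \<and> P 2 \<and> P 3 \<and> P 4 \<and> P 5 \<and> P 6 \<and> P 7"
  by auto

lemma sq1: "x\<^sup>2 + y\<^sup>2 + z\<^sup>2 \<le> (1::real) \<Longrightarrow> \<bar>x\<bar> \<le> 1"
proof -
  assume a: "x\<^sup>2 + y\<^sup>2 + z\<^sup>2 \<le> 1"
  have "y\<^sup>2 \<ge> 0" "z\<^sup>2 \<ge> 0" by simp_all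
  then have "x\<^sup>2 \<le> 1\<^sup>2" using a by (smt (verit) one_power2)
  then show ?thesis using abs_le_square_iff[of x 1] by simp
qed

lemma sq1y: "x\<^sup>2 + y\<^sup>2 + z\<^sup>2 \<le> (1::real) \<Longrightarrow> \<bar>y\<bar> \<le> 1"
  using sq1[of y x z] by (simp add: add_ac)

lemma sq1z: "x\<^sup>2 + y\<^sup>2 + z\<^sup>2 \<le> (1::real) \<Longrightarrow> \<bar>z\<bar> \<le> 1"
  using sq1[of z x y] by (simp add: add_ac)

lemma sq2: "x\<^sup>2 + y\<^sup>2 + z\<^sup>2 \<le> (1::real) \<Longrightarrow> \<bar>y\<bar> \<le> sqrt (1 - x\<^sup>2)"
proof -
  assume a: "x\<^sup>2 + y\<^sup>2 + z\<^sup>2 \<le> 1"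
  have "z\<^sup>2 \<ge> 0" by simp
  then have "y\<^sup>2 \<le> 1 - x\<^sup>2" using a by (smt (verit))
  then have "\<bar>y\<bar>\<^sup>2 \<le> 1 - x\<^sup>2" unfolding power2_abs .
  then show ?thesis by (rule real_le_rsqrt)
qed

lemma sq3: "x\<^sup>2 + y\<^sup>2 + z\<^sup>2 \<le> (1::real) \<Longrightarrow> x\<^sup>2 + y\<^sup>2 + w\<^sup>2 = 1 \<Longrightarrow> \<bar>z\<bar> \<le> \<bar>w\<bar>"
proof -
  assume a: "x\<^sup>2 + y\<^sup>2 + z\<^sup>2 \<le> 1" and b: "x\<^sup>2 + y\<^sup>2 + w\<^sup>2 = 1"
  then have "z\<^sup>2 \<le> w\<^sup>2" by simp
  then show ?thesis using abs_le_square_iff by blast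
qed

lemma lt3: "m < (3::nat) \<Longrightarrow> m = 0 \<or> m = 1 \<or> m = 2" by presburger

lemma in_cr: "pure_2qubit r' \<Longrightarrow> (\<forall>l\<in>{1..<i}. bloch r' l = bloch rho l) \<Longrightarrow> bloch r' i \<in> cond_range rho i"
  unfolding cond_range_def by blast

lemma cr_elim: "x \<in> cond_range rho i \<Longrightarrow> (\<And>r'. x = bloch r' i \<Longrightarrow> pure_2qubit r' \<Longrightarrow> (\<forall>l\<in>{1..<i}. bloch r' l = bloch rho l) \<Longrightarrow> P) \<Longrightarrow> P"
  unfolding cond_range_def by blast

lemma hm0: "cond_range rho i \<subseteq> {x. \<bar>x\<bar> \<le> r} \<Longrightarrow> r \<in> cond_range rho i \<Longrightarrow> -r \<in> cond_range rho i \<Longrightarrow> h_mid rho i = 0"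
  unfolding h_mid_def b_max_def b_min_def using sym_sup_inf[of "cond_range rho i" r] by simp

lemma sum216: "(\<Sum>i=(2::nat)..16. f i) = f 2 + f 3 + f 4 + f 5 + f 6 + f 7 + (f 8 + f 9 + f 10 + f 11 + f 12 + f 13 + f 14 + f 15 + (f 16 :: real))"
  by (simp add: sum.atLeast_Suc_atMost add_ac)

theorem lemma4:
  fixes rho :: cmat and O1 O2 :: "real^3^3" and \<theta> \<mu> :: real
  assumes "pure_2qubit rho"
    and "O1 \<in> SO3" and "O2 \<in> SO3"
    and "0 \<le> \<theta>" and "\<theta> \<le> pi / 2"
    and "\<mu> = cos \<theta>"
    and "bloch_alpha rho = O1 *v vector [\<mu>, 0, 0]"
    and "bloch_beta rho = O2 *v vector [\<mu>, 0, 0]"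
    and "bloch_C rho = O1 ** vector [vector [1, 0, 0], vector [0, sin \<theta>, 0], vector [0, 0, - sin \<theta>]] ** transpose O2"
    and "\<bar>\<mu>\<bar> = 1"
  shows "I_chi2_post rho = 2"
proof -
  have pr: "pure_2qubit rho" using assms(1) .
  have N: "bloch rho 1 = 1" using pure_bloch1[OF pr] .
  have mu2: "\<mu>\<^sup>2 = 1" using assms(10) by (metis abs_power2 power2_abs one_power2 power2_eq_1_iff abs_eq_iff)
  have col: "(Q$1$1)\<^sup>2 + (Q$2$1)\<^sup>2 + (Q$3$1)\<^sup>2 = 1" if "Q \<in> SO3" for Q :: "real^3^3"
  proof -
    have "transpose Q ** Q = mat 1" using that unfolding SO3_def orthogonal_matrix by simp
    then have "(transpose Q ** Q) $ 1 $ 1 = (mat 1 :: real^3^3) $ 1 $ 1" by simp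
    then show ?thesis by (simp add: matrix_matrix_mult_def transpose_def mat_def sum_3 power2_eq_square)
  qed
  have ea: "bloch rho 2 = O1$1$1 * \<mu>" "bloch rho 3 = O1$2$1 * \<mu>" "bloch rho 4 = O1$3$1 * \<mu>"
  proof -
    have "(bloch_alpha rho)$1 = (O1 *v vector [\<mu>, 0, 0])$1" "(bloch_alpha rho)$2 = (O1 *v vector [\<mu>, 0, 0])$2"
      "(bloch_alpha rho)$3 = (O1 *v vector [\<mu>, 0, 0])$3" using assms(7) by simp_all
    then show "bloch rho 2 = O1$1$1 * \<mu>" "bloch rho 3 = O1$2$1 * \<mu>" "bloch rho 4 = O1$3$1 * \<mu>"
      by (simp_all add: bloch_alpha_def matrix_vector_mult_def sum_3)
  qed
  have eb: "bloch rho 5 = O2$1$1 * \<mu>" "bloch rho 6 = O2$2$1 * \<mu>" "bloch rho 7 = O2$3$1 * \<mu>"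
  proof -
    have "(bloch_beta rho)$1 = (O2 *v vector [\<mu>, 0, 0])$1" "(bloch_beta rho)$2 = (O2 *v vector [\<mu>, 0, 0])$2"
      "(bloch_beta rho)$3 = (O2 *v vector [\<mu>, 0, 0])$3" using assms(8) by simp_all
    then show "bloch rho 5 = O2$1$1 * \<mu>" "bloch rho 6 = O2$2$1 * \<mu>" "bloch rho 7 = O2$3$1 * \<mu>"
      by (simp_all add: bloch_beta_def matrix_vector_mult_def sum_3)
  qed
  have ua: "(bloch rho 2)\<^sup>2 + (bloch rho 3)\<^sup>2 + (bloch rho 4)\<^sup>2 = 1"
  proof -
    have "(bloch rho 2)\<^sup>2 + (bloch rho 3)\<^sup>2 + (bloch rho 4)\<^sup>2 = ((O1$1$1)\<^sup>2 + (O1$2$1)\<^sup>2 + (O1$3$1)\<^sup>2) * \<mu>\<^sup>2"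
      unfolding ea by (simp add: power_mult_distrib algebra_simps)
    then show ?thesis using col[OF assms(2)] mu2 by simp
  qed
  have ub: "(bloch rho 5)\<^sup>2 + (bloch rho 6)\<^sup>2 + (bloch rho 7)\<^sup>2 = 1"
  proof -
    have "(bloch rho 5)\<^sup>2 + (bloch rho 6)\<^sup>2 + (bloch rho 7)\<^sup>2 = ((O2$1$1)\<^sup>2 + (O2$2$1)\<^sup>2 + (O2$3$1)\<^sup>2) * \<mu>\<^sup>2"
      unfolding eb by (simp add: power_mult_distrib algebra_simps)
    then show ?thesis using col[OF assms(3)] mu2 by simp
  qed
  define a1 where "a1 = bloch rho 2"
  define a2 where "a2 = bloch rho 3"
  define a3 where "a3 = bloch rho 4"
  define b1 where "b1 = bloch rho 5"
  define b2 where "b2 = bloch rho 6"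
  define b3 where "b3 = bloch rho 7"
  have ua': "a1\<^sup>2 + a2\<^sup>2 + a3\<^sup>2 = 1" using ua unfolding a1_def a2_def a3_def .
  have ub': "b1\<^sup>2 + b2\<^sup>2 + b3\<^sup>2 = 1" using ub unfolding b1_def b2_def b3_def .
  have a1le: "a1\<^sup>2 \<le> 1" using ua' by (smt (verit) zero_le_power2)
  have b1le: "b1\<^sup>2 \<le> 1" using ub' by (smt (verit) zero_le_power2)

  have h2: "h_mid rho 2 = 0"
  proof (rule hm0[where r = 1])
    show "cond_range rho 2 \<subseteq> {x. \<bar>x\<bar> \<le> 1}"
    proof
      fix x assume "x \<in> cond_range rho 2"
      then show "x \<in> {x. \<bar>x\<bar> \<le> 1}"
        by (rule cr_elim) (use pure_alpha_bound(1) sq1 in blast)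
    qed
    obtain r' where r': "pure_2qubit r'" "bloch r' 1 = 1" "bloch r' 2 = 1"
      using product_exists[of 1 0 0 1 0 0] by auto
    show "1 \<in> cond_range rho 2" using in_cr[of r' 2 rho] r' N unfolding ball2 by simp
    obtain r'' where r'': "pure_2qubit r''" "bloch r'' 1 = 1" "bloch r'' 2 = -1"
      using product_exists[of "-1" 0 0 1 0 0] by auto
    show "-1 \<in> cond_range rho 2" using in_cr[of r'' 2 rho] r'' N unfolding ball2 by simp
  qed

  define s where "s = sqrt (1 - a1\<^sup>2)"
  have ss: "s\<^sup>2 = 1 - a1\<^sup>2" unfolding s_def using a1le by simp
  have h3: "h_mid rho 3 = 0"
  proof (rule hm0[where r = s])
    show "cond_range rho 3 \<subseteq> {x. \<bar>x\<bar> \<le> s}"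
    proof
      fix x assume "x \<in> cond_range rho 3"
      then show "x \<in> {x. \<bar>x\<bar> \<le> s}"
      proof (rule cr_elim)
        fix r' assume "x = bloch r' 3" "pure_2qubit r'" "\<forall>l\<in>{1..<3}. bloch r' l = bloch rho l"
        then show ?thesis using pure_alpha_bound(1)[of r'] sq2 unfolding ball3 s_def a1_def by simp
      qed
    qed
    obtain r' where r': "pure_2qubit r'" "bloch r' 1 = 1" "bloch r' 2 = a1" "bloch r' 3 = s"
      using product_exists[of a1 s 0 1 0 0] ss by auto
    show "s \<in> cond_range rho 3" using in_cr[of r' 3 rho] r' N unfolding ball3 a1_def by simp
    obtain r'' where r'': "pure_2qubit r''" "bloch r'' 1 = 1" "bloch r'' 2 = a1" "bloch r'' 3 = -s"
      using product_exists[of a1 "-s" 0 1 0 0] ss by auto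
    show "-s \<in> cond_range rho 3" using in_cr[of r'' 3 rho] r'' N unfolding ball3 a1_def by simp
  qed

  have h4: "h_mid rho 4 = 0"
  proof (rule hm0[where r = "\<bar>a3\<bar>"])
    show "cond_range rho 4 \<subseteq> {x. \<bar>x\<bar> \<le> \<bar>a3\<bar>}"
    proof
      fix x assume "x \<in> cond_range rho 4"
      then show "x \<in> {x. \<bar>x\<bar> \<le> \<bar>a3\<bar>}"
      proof (rule cr_elim)
        fix r' assume "x = bloch r' 4" "pure_2qubit r'" "\<forall>l\<in>{1..<4}. bloch r' l = bloch rho l"
        then show ?thesis using pure_alpha_bound(1)[of r'] sq3[of a1 a2 x a3] ua' unfolding ball4 a1_def a2_def by simp
      qed
    qed
    obtain r' where r': "pure_2qubit r'" "bloch r' 1 = 1" "bloch r' 2 = a1" "bloch r' 3 = a2" "bloch r' 4 = \<bar>a3\<bar>"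
      using product_exists[of a1 a2 "\<bar>a3\<bar>" 1 0 0] ua' by auto
    show "\<bar>a3\<bar> \<in> cond_range rho 4" using in_cr[of r' 4 rho] r' N unfolding ball4 a1_def a2_def by simp
    obtain r'' where r'': "pure_2qubit r''" "bloch r'' 1 = 1" "bloch r'' 2 = a1" "bloch r'' 3 = a2" "bloch r'' 4 = -\<bar>a3\<bar>"
      using product_exists[of a1 a2 "-\<bar>a3\<bar>" 1 0 0] ua' by auto
    show "-\<bar>a3\<bar> \<in> cond_range rho 4" using in_cr[of r'' 4 rho] r'' N unfolding ball4 a1_def a2_def by simp
  qed

  have h5: "h_mid rho 5 = 0"
  proof (rule hm0[where r = 1])
    show "cond_range rho 5 \<subseteq> {x. \<bar>x\<bar> \<le> 1}"
    proof
      fix x assume "x \<in> cond_range rho 5"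
      then show "x \<in> {x. \<bar>x\<bar> \<le> 1}"
        by (rule cr_elim) (use pure_alpha_bound(2) sq1 in blast)
    qed
    obtain r' where r': "pure_2qubit r'" "bloch r' 1 = 1" "bloch r' 2 = a1" "bloch r' 3 = a2" "bloch r' 4 = a3" "bloch r' 5 = 1"
      using product_exists[of a1 a2 a3 1 0 0] ua' by auto
    show "1 \<in> cond_range rho 5" using in_cr[of r' 5 rho] r' N unfolding ball5 a1_def a2_def a3_def by simp
    obtain r'' where r'': "pure_2qubit r''" "bloch r'' 1 = 1" "bloch r'' 2 = a1" "bloch r'' 3 = a2" "bloch r'' 4 = a3" "bloch r'' 5 = -1"
      using product_exists[of a1 a2 a3 "-1" 0 0] ua' by auto
    show "-1 \<in> cond_range rho 5" using in_cr[of r'' 5 rho] r'' N unfolding ball5 a1_def a2_def a3_def by simp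
  qed

  define t where "t = sqrt (1 - b1\<^sup>2)"
  have tt: "t\<^sup>2 = 1 - b1\<^sup>2" unfolding t_def using b1le by simp
  have h6: "h_mid rho 6 = 0"
  proof (rule hm0[where r = t])
    show "cond_range rho 6 \<subseteq> {x. \<bar>x\<bar> \<le> t}"
    proof
      fix x assume "x \<in> cond_range rho 6"
      then show "x \<in> {x. \<bar>x\<bar> \<le> t}"
      proof (rule cr_elim)
        fix r' assume "x = bloch r' 6" "pure_2qubit r'" "\<forall>l\<in>{1..<6}. bloch r' l = bloch rho l"
        then show ?thesis using pure_alpha_bound(2)[of r'] sq2 unfolding ball6 t_def b1_def by simp
      qed
    qed
    obtain r' where r': "pure_2qubit r'" "bloch r' 1 = 1" "bloch r' 2 = a1" "bloch r' 3 = a2" "bloch r' 4 = a3" "bloch r' 5 = b1" "bloch r' 6 = t"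
      using product_exists[of a1 a2 a3 b1 t 0] ua' tt by auto
    show "t \<in> cond_range rho 6" using in_cr[of r' 6 rho] r' N unfolding ball6 a1_def a2_def a3_def b1_def by simp
    obtain r'' where r'': "pure_2qubit r''" "bloch r'' 1 = 1" "bloch r'' 2 = a1" "bloch r'' 3 = a2" "bloch r'' 4 = a3" "bloch r'' 5 = b1" "bloch r'' 6 = -t"
      using product_exists[of a1 a2 a3 b1 "-t" 0] ua' tt by auto
    show "-t \<in> cond_range rho 6" using in_cr[of r'' 6 rho] r'' N unfolding ball6 a1_def a2_def a3_def b1_def by simp
  qed

  have h7: "h_mid rho 7 = 0"
  proof (rule hm0[where r = "\<bar>b3\<bar>"])
    show "cond_range rho 7 \<subseteq> {x. \<bar>x\<bar> \<le> \<bar>b3\<bar>}"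
    proof
      fix x assume "x \<in> cond_range rho 7"
      then show "x \<in> {x. \<bar>x\<bar> \<le> \<bar>b3\<bar>}"
      proof (rule cr_elim)
        fix r' assume "x = bloch r' 7" "pure_2qubit r'" "\<forall>l\<in>{1..<7}. bloch r' l = bloch rho l"
        then show ?thesis using pure_alpha_bound(2)[of r'] sq3[of b1 b2 x b3] ub' unfolding ball7 b1_def b2_def by simp
      qed
    qed
    obtain r' where r': "pure_2qubit r'" "bloch r' 1 = 1" "bloch r' 2 = a1" "bloch r' 3 = a2" "bloch r' 4 = a3" "bloch r' 5 = b1" "bloch r' 6 = b2" "bloch r' 7 = \<bar>b3\<bar>"
      using product_exists[of a1 a2 a3 b1 b2 "\<bar>b3\<bar>"] ua' ub' by auto
    show "\<bar>b3\<bar> \<in> cond_range rho 7" using in_cr[of r' 7 rho] r' N unfolding ball7 a1_def a2_def a3_def b1_def b2_def by simp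
    obtain r'' where r'': "pure_2qubit r''" "bloch r'' 1 = 1" "bloch r'' 2 = a1" "bloch r'' 3 = a2" "bloch r'' 4 = a3" "bloch r'' 5 = b1" "bloch r'' 6 = b2" "bloch r'' 7 = -\<bar>b3\<bar>"
      using product_exists[of a1 a2 a3 b1 b2 "-\<bar>b3\<bar>"] ua' ub' by auto
    show "-\<bar>b3\<bar> \<in> cond_range rho 7" using in_cr[of r'' 7 rho] r'' N unfolding ball7 a1_def a2_def a3_def b1_def b2_def by simp
  qed

  have tC: "D_chi2 (bloch rho i) (h_mid rho i) = 0" if i: "8 \<le> i" "i \<le> 16" for i
  proof -
    define j where "j = 2 + (i - 8) div 3"
    define k where "k = 5 + (i - 8) mod 3"
    have "(i - 8) div 3 \<le> 8 div 3" using i by (intro div_le_mono) simp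
    then have "(i - 8) div 3 < 3" by simp
    then have j: "j = 2 \<or> j = 3 \<or> j = 4" unfolding j_def using lt3 by fastforce
    have "(i - 8) mod 3 < 3" by simp
    then have k: "k = 5 \<or> k = 6 \<or> k = 7" unfolding k_def using lt3 by fastforce
    have val: "bloch rho i = bloch rho j * bloch rho k"
      using pure_prod[OF pr ua i] unfolding j_def k_def .
    have sub: "cond_range rho i \<subseteq> {bloch rho i}"
    proof
      fix x assume "x \<in> cond_range rho i"
      then show "x \<in> {bloch rho i}"
      proof (rule cr_elim)
        fix r' assume x: "x = bloch r' i" and p': "pure_2qubit r'" and ag: "\<forall>l\<in>{1..<i}. bloch r' l = bloch rho l"
        have agj: "bloch r' j = bloch rho j" using ag j i by auto
        have agk: "bloch r' k = bloch rho k" using ag k i by auto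
        have "(bloch r' 2)\<^sup>2 + (bloch r' 3)\<^sup>2 + (bloch r' 4)\<^sup>2 = 1" using ag i ua by auto
        then have "bloch r' i = bloch r' j * bloch r' k"
          using pure_prod[OF p' _ i] unfolding j_def k_def by blast
        then show ?thesis using x agj agk val by simp
      qed
    qed
    have mem: "bloch rho i \<in> cond_range rho i" using in_cr[of rho i rho] pr by blast
    have eq: "cond_range rho i = {bloch rho i}" using sub mem by blast
    have hm: "h_mid rho i = bloch rho i" unfolding h_mid_def b_max_def b_min_def eq by simp
    have "\<bar>bloch rho 2\<bar> \<le> 1" "\<bar>bloch rho 3\<bar> \<le> 1" "\<bar>bloch rho 4\<bar> \<le> 1"
      using sq1[OF ua[THEN eq_refl]] sq1y[OF ua[THEN eq_refl]] sq1z[OF ua[THEN eq_refl]] by simp_all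
    then have bj: "\<bar>bloch rho j\<bar> \<le> 1" using j by auto
    have "\<bar>bloch rho 5\<bar> \<le> 1" "\<bar>bloch rho 6\<bar> \<le> 1" "\<bar>bloch rho 7\<bar> \<le> 1"
      using sq1[OF ub[THEN eq_refl]] sq1y[OF ub[THEN eq_refl]] sq1z[OF ub[THEN eq_refl]] by simp_all
    then have bk: "\<bar>bloch rho k\<bar> \<le> 1" using k by auto
    have "\<bar>bloch rho i\<bar> \<le> 1" unfolding val abs_mult using bj bk by (simp add: mult_le_one)
    then show ?thesis unfolding hm by (rule Dsame)
  qed
  have "I_chi2_post rho = (bloch rho 2)\<^sup>2 + (bloch rho 3)\<^sup>2 + (bloch rho 4)\<^sup>2 + (bloch rho 5)\<^sup>2 + (bloch rho 6)\<^sup>2 + (bloch rho 7)\<^sup>2"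
    unfolding I_chi2_post_def sum216 h2 h3 h4 h5 h6 h7 D0
    by (simp add: tC)
  then show ?thesis using ua ub by simp
qed

end
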